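(* Elements of $\mathcal{L}_s$ are compared as follows: for all finite $E, F \subseteq \mathcal{X}$, variables $x, y$ and $S, K \in \mathbb{N}$ such that the sublevels involved belong to $\mathcal{L}_s$, (1) $A(E, x, S) \not\leqslant_{\mathcal{L}} B(F, K)$; (2) $B(E, S) \leqslant_{\mathcal{L}} B(F, K) \iff F \subseteq E \land S \leqslant K$; (3) $B(E, S) \leqslant_{\mathcal{L}} A(F, x, K) \iff F \subseteq E \land S \leqslant K + 1$; (4) $A(E, x, S) \leqslant_{\mathcal{L}} A(F, y, K) \iff F \subseteq E \land x = y \land S \leqslant K$.
   Context: $\mathcal{X}$ is a countable set of variables; a valuation is $\sigma\colon\mathcal{X}\to\mathbb{N}$. For finite $E\subseteq\mathcal{X}$, $x\in\mathcal{X}$, $S\in\mathbb{N}$, the sublevels $A(E,x,S)$ and $B(E,S)$ have values $[A(E,x,S)]_\sigma = 0$ if some $y\in E$ has $\sigma(y)=0$, and $\sigma(x)+S$ otherwise; $[B(E,S)]_\sigma=0$ if some $y\in E$ has $\sigma(y)=0$, and $S$ otherwise. $\mathcal{L}_s$ is the set of sublevels $A(E,x,S)$ with $x \in E$ and $B(E,S)$ with $S>0$. For such expressions, $t_1 \leqslant_{\mathcal{L}} t_2$ means $[t_1]_\sigma \le [t_2]_\sigma$ for every valuation $\sigma$. *)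

theory Defs
  imports Main "HOL-Library.Countable"
begin

datatype 'v sublevel = SubA "'v set" 'v nat | SubB "'v set" nat

fun sl_val :: "'v sublevel \<Rightarrow> ('v \<Rightarrow> nat) \<Rightarrow> nat" where
  "sl_val (SubA E x S) \<sigma> = (if \<exists>y\<in>E. \<sigma> y = 0 then 0 else \<sigma> x + S)"
| "sl_val (SubB E S) \<sigma> = (if \<exists>y\<in>E. \<sigma> y = 0 then 0 else S)"

fun in_Ls :: "'v sublevel \<Rightarrow> bool" where
  "in_Ls (SubA E x S) = (finite E \<and> x \<in> E)"
| "in_Ls (SubB E S) = (finite E \<and> S > 0)"

definition leqL :: "'v sublevel \<Rightarrow> 'v sublevel \<Rightarrow> bool" where
  "leqL t1 t2 = (\<forall>\<sigma>. sl_val t1 \<sigma> \<le> sl_val t2 \<sigma>)"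

end

theory Submission
  imports Defs
begin

theorem theorem29:
  fixes dummy :: "'v::countable itself"
  shows
  "(\<forall>(E::'v set) F x S K. in_Ls (SubA E x S) \<and> in_Ls (SubB F K)
       \<longrightarrow> \<not> leqL (SubA E x S) (SubB F K))
   \<and> (\<forall>(E::'v set) F S K. in_Ls (SubB E S) \<and> in_Ls (SubB F K)
       \<longrightarrow> (leqL (SubB E S) (SubB F K) \<longleftrightarrow> F \<subseteq> E \<and> S \<le> K))
   \<and> (\<forall>(E::'v set) F x S K. in_Ls (SubB E S) \<and> in_Ls (SubA F x K)
       \<longrightarrow> (leqL (SubB E S) (SubA F x K) \<longleftrightarrow> F \<subseteq> E \<and> S \<le> K + 1))
   \<and> (\<forall>(E::'v set) F x y S K. in_Ls (SubA E x S) \<and> in_Ls (SubA F y K)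
       \<longrightarrow> (leqL (SubA E x S) (SubA F y K) \<longleftrightarrow> F \<subseteq> E \<and> x = y \<and> S \<le> K))"
proof -
  have sub: "F \<subseteq> E" if "\<forall>\<sigma>::'v\<Rightarrow>nat. (\<exists>y\<in>F. \<sigma> y = 0) \<longrightarrow> (\<exists>y\<in>E. \<sigma> y = 0)" for E F :: "'v set"
  proof
    fix z assume "z \<in> F"
    then have "\<exists>y\<in>E. (if y = z then 0 else 1::nat) = 0"
      using that[rule_format, of "\<lambda>v. if v = z then 0 else 1"] by auto
    then show "z \<in> E" by (metis one_neq_zero)
  qed
  show ?thesis
  proof (intro conjI allI impI)
    fix E F :: "'v set" and x S K
    assume "in_Ls (SubA E x S) \<and> in_Ls (SubB F K)"
    show "\<not> leqL (SubA E x S) (SubB F K)"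
      unfolding leqL_def by (auto intro!: exI[of _ "\<lambda>_. K+1"])
  next
    fix E F :: "'v set" and S K
    assume h: "in_Ls (SubB E S) \<and> in_Ls (SubB F K)"
    show "leqL (SubB E S) (SubB F K) \<longleftrightarrow> F \<subseteq> E \<and> S \<le> K"
    proof
      assume l: "leqL (SubB E S) (SubB F K)"
      have "S \<le> K" using l[unfolded leqL_def, rule_format, of "\<lambda>_. 1"] by simp
      moreover have "F \<subseteq> E"
        by (rule sub) (use l h in \<open>auto simp: leqL_def split: if_splits\<close>; metis not_gr0)
      ultimately show "F \<subseteq> E \<and> S \<le> K" by simp
    qed (force simp: leqL_def subset_iff)
  next
    fix E F :: "'v set" and x S K
    assume h: "in_Ls (SubB E S) \<and> in_Ls (SubA F x K)"
    show "leqL (SubB E S) (SubA F x K) \<longleftrightarrow> F \<subseteq> E \<and> S \<le> K + 1"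
    proof
      assume l: "leqL (SubB E S) (SubA F x K)"
      have "S \<le> K + 1" using l[unfolded leqL_def, rule_format, of "\<lambda>_. 1"] by simp
      moreover have "F \<subseteq> E"
        by (rule sub) (use l h in \<open>auto simp: leqL_def split: if_splits\<close>; metis not_gr0)
      ultimately show "F \<subseteq> E \<and> S \<le> K + 1" by simp
    next
      assume "F \<subseteq> E \<and> S \<le> K + 1"
      with h show "leqL (SubB E S) (SubA F x K)"
        by (auto simp: leqL_def)
    qed
  next
    fix E F :: "'v set" and x y S K
    assume h: "in_Ls (SubA E x S) \<and> in_Ls (SubA F y K)"
    show "leqL (SubA E x S) (SubA F y K) \<longleftrightarrow> F \<subseteq> E \<and> x = y \<and> S \<le> K"
    proof
      assume l: "leqL (SubA E x S) (SubA F y K)"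
      have "S \<le> K" using l[unfolded leqL_def, rule_format, of "\<lambda>_. 1"] by simp
      moreover have "x = y"
      proof (rule ccontr)
        assume "x \<noteq> y"
        define \<sigma> where "\<sigma> = (\<lambda>v. if v = x then K + 2 else (1::nat))"
        have p: "\<forall>v. \<sigma> v \<noteq> 0" by (simp add: \<sigma>_def)
        have a1: "sl_val (SubA E x S) \<sigma> = K + 2 + S" using p by (simp add: \<sigma>_def)
        have a2: "sl_val (SubA F y K) \<sigma> = 1 + K" using p \<open>x \<noteq> y\<close> by (simp add: \<sigma>_def)
        have "sl_val (SubA E x S) \<sigma> \<le> sl_val (SubA F y K) \<sigma>" using l unfolding leqL_def by blast
        then show False unfolding a1 a2 by simp
      qed
      moreover have "F \<subseteq> E"
        by (rule sub) (use l h in \<open>auto simp: leqL_def split: if_splits\<close>; metis not_gr0)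
      ultimately show "F \<subseteq> E \<and> x = y \<and> S \<le> K" by simp
    qed (force simp: leqL_def subset_iff)
  qed
qed

end
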